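(* Suppose that $\Gamma(t)$ is finite for every $t\in S$. Let $D\subset S$ and let $A\subset\Omega$ be $D$-determined. Then $F_A\cap\mathcal H_\pi=F^D_A\cap\mathcal H_\pi$.
   Context: Let $\mathcal H$ be a complex Hilbert space. A projection is a bounded self-adjoint idempotent operator; $\wedge_\alpha p_\alpha$ is the projection onto the intersection of the ranges of the $p_\alpha$. Sums of countably many operators are understood strongly. Let $S$ be an arbitrary set; for each $t\in S$ let $\Gamma(t)$ be a countable set and for $a\in\Gamma(t)$ let $p^t_a$ be a projection on $\mathcal H$ with $\sum_{a\in\Gamma(t)}p^t_a=I$. Let $\pi=\{p^t_a\}$ and $p^{t_1,\dots,t_k}_{a_1,\dots,a_k}=\wedge_{i=1}^kp^{t_i}_{a_i}$. $\pi$ commutes on $\phi$ if $W\phi=V\phi$ whenever $W,V$ are finite products of elements of $\pi$ with the same factors (with multiplicity) in possibly different orders; $\mathcal H_\pi$ is the set of such $\phi$. Let $\Omega=\prod_{t\in S}\Gamma(t)$. For $A\subset\Omega$ and $D\subset S$, $F^D_A=\{\phi\in\mathcal H:$ for every $\omega\in A$ there are $t_1,\dots,t_k\in D$ with $p^{t_1,\dots,t_k}_{\omega_{t_1},\dots,\omega_{t_k}}\phi=0\}$, and $F_A=F^S_A$. A set $A\subset\Omega$ is $D$-determined if any two elements of $\Omega$ with identical restrictions to $D$ either both belong to $A$ or both do not. *)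

theory Defs
  imports "HOL-Analysis.Analysis" "HOL-Library.Multiset"
begin

text \<open>A complex Hilbert space is modelled as a real Hilbert space
  (type class real_inner + complete_space) together with a complex structure J
  (multiplication by the imaginary unit): J is real-linear, J (J x) = -x and J is
  an isometry for the real inner product. The complex inner product is then
  inner x y + i * inner x (J y) (real part = the real inner product).\<close>

definition complex_structure :: "('h::real_inner \<Rightarrow> 'h) \<Rightarrow> bool" where
  "complex_structure J \<longleftrightarrow> linear J \<and> (\<forall>x. J (J x) = - x) \<and> (\<forall>x y. inner (J x) (J y) = inner x y)"

text \<open>For complex-linear operators, self-adjointness for the complex inner product is
  equivalent to self-adjointness for its real part.\<close>

definition is_projection :: "('h::real_inner \<Rightarrow> 'h) \<Rightarrow> ('h \<Rightarrow> 'h) \<Rightarrow> bool" where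
  "is_projection J p \<longleftrightarrow> bounded_linear p \<and> (\<forall>x. p (J x) = J (p x)) \<and> p \<circ> p = p
     \<and> (\<forall>x y. inner (p x) y = inner x (p y))"

definition wedge :: "('h::real_inner \<Rightarrow> 'h) \<Rightarrow> ('h \<Rightarrow> 'h) set \<Rightarrow> ('h \<Rightarrow> 'h)" where
  "wedge J P = (THE q. is_projection J q \<and> range q = \<Inter> (range ` P))"

definition proj_family :: "'s set \<Rightarrow> ('s \<Rightarrow> 'b set) \<Rightarrow> ('s \<Rightarrow> 'b \<Rightarrow> 'h \<Rightarrow> 'h) \<Rightarrow> ('h \<Rightarrow> 'h) set" where
  "proj_family S \<Gamma> p = {p t a | t a. t \<in> S \<and> a \<in> \<Gamma> t}"

text \<open>H_pi: vectors on which pi commutes (finite products with the same factors, with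
  multiplicity, agree on phi).\<close>

definition commuting_vectors :: "('h \<Rightarrow> 'h) set \<Rightarrow> 'h set" where
  "commuting_vectors PP = {\<phi>. \<forall>ws vs. set ws \<subseteq> PP \<and> set vs \<subseteq> PP \<and> mset ws = mset vs
       \<longrightarrow> foldr (\<circ>) ws id \<phi> = foldr (\<circ>) vs id \<phi>}"

definition Omega :: "'s set \<Rightarrow> ('s \<Rightarrow> 'b set) \<Rightarrow> ('s \<Rightarrow> 'b) set" where
  "Omega S \<Gamma> = PiE S \<Gamma>"

definition F_set :: "('h::real_inner \<Rightarrow> 'h) \<Rightarrow> ('s \<Rightarrow> 'b \<Rightarrow> 'h \<Rightarrow> 'h) \<Rightarrow> 's set \<Rightarrow> ('s \<Rightarrow> 'b) set \<Rightarrow> 'h set" where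
  "F_set J p D A = {\<phi>. \<forall>\<omega>\<in>A. \<exists>T. finite T \<and> T \<subseteq> D \<and> wedge J ((\<lambda>t. p t (\<omega> t)) ` T) \<phi> = 0}"

definition determined :: "('s \<Rightarrow> 'b) set \<Rightarrow> 's set \<Rightarrow> ('s \<Rightarrow> 'b) set \<Rightarrow> bool" where
  "determined Om D A \<longleftrightarrow> (\<forall>\<omega>\<in>Om. \<forall>\<omega>'\<in>Om. (\<forall>t\<in>D. \<omega> t = \<omega>' t) \<longrightarrow> (\<omega> \<in> A \<longleftrightarrow> \<omega>' \<in> A))"

end

theory Submission
  imports Defs
begin

lemma proj_thm:
  fixes M :: "'h::{real_inner,complete_space} set"
  assumes cl: "closed M" and sub: "subspace M"
  shows "\<exists>m\<in>M. \<forall>z\<in>M. inner (x - m) z = 0"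
proof -
  have ne: "M \<noteq> {}" using subspace_0[OF sub] by auto
  define d where "d = Inf ((\<lambda>y. norm (x - y)) ` M)"
  have bdd: "bdd_below ((\<lambda>y. norm (x - y)) ` M)" by (rule bdd_belowI[of _ 0]) auto
  have dle: "d \<le> norm (x - y)" if "y \<in> M" for y
    unfolding d_def using bdd that by (auto intro: cInf_lower)
  have d0: "0 \<le> d" unfolding d_def using ne by (auto intro: cInf_greatest)
  have "\<exists>y\<in>M. norm (x - y)^2 < d^2 + inverse (real (Suc n))" for n
  proof -
    have "d < sqrt (d^2 + inverse (real (Suc n)))"
      using d0 by (metis add_pos_nonneg inverse_positive_iff_positive less_add_same_cancel1 of_nat_0_less_iff real_sqrt_abs real_sqrt_less_mono zero_less_Suc abs_of_nonneg add.commute add_less_cancel_left)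
    then obtain y where "y \<in> M" "norm (x - y) < sqrt (d^2 + inverse (real (Suc n)))"
      using cInf_lessD[of "(\<lambda>y. norm (x - y)) ` M"] ne unfolding d_def by auto
    moreover have "norm (x - y)^2 < (sqrt (d^2 + inverse (real (Suc n))))^2"
      using calculation(2) by (intro power_strict_mono) auto
    moreover have "(sqrt (d^2 + inverse (real (Suc n))))^2 = d^2 + inverse (real (Suc n))"
      by (intro real_sqrt_pow2) simp
    ultimately show ?thesis by auto
  qed
  then obtain y where yM: "\<And>n. y n \<in> M" and yb: "\<And>n. norm (x - y n)^2 < d^2 + inverse (real (Suc n))"
    by metis
  have para: "norm (y n - y k)^2 \<le> 2 * inverse (real (Suc n)) + 2 * inverse (real (Suc k))" for n k
  proof -
    have mid: "(1/2) *\<^sub>R (y n + y k) \<in> M"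
      using yM sub by (simp add: subspace_add subspace_scale)
    have "d \<le> norm (x - (1/2) *\<^sub>R (y n + y k))" using dle[OF mid] .
    hence "d^2 \<le> norm (x - (1/2) *\<^sub>R (y n + y k))^2" using d0 power_mono by blast
    moreover have "norm (y n - y k)^2 = 2 * norm (x - y n)^2 + 2 * norm (x - y k)^2 - 4 * norm (x - (1/2) *\<^sub>R (y n + y k))^2"
      unfolding power2_norm_eq_inner
      by (simp add: inner_diff_left inner_diff_right inner_add_left inner_add_right inner_commute algebra_simps)
    ultimately show ?thesis using yb[of n] yb[of k] by linarith
  qed
  have "Cauchy y"
  proof (rule CauchyI)
    fix e :: real assume e: "0 < e"
    obtain N :: nat where N: "inverse (real (Suc N)) < e^2 / 4"
      using e by (metis reals_Archimedean divide_pos_pos zero_less_numeral zero_less_power)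
    show "\<exists>N. \<forall>m\<ge>N. \<forall>n\<ge>N. norm (y m - y n) < e"
    proof (intro exI allI impI)
      fix m n assume mN: "m \<ge> N" and nN: "n \<ge> N"
      have "inverse (real (Suc m)) \<le> inverse (real (Suc N))" using mN by (simp add: le_imp_inverse_le)
      moreover have "inverse (real (Suc n)) \<le> inverse (real (Suc N))" using nN by (simp add: le_imp_inverse_le)
      ultimately have "norm (y m - y n)^2 < e^2" using para[of m n] N by linarith
      then show "norm (y m - y n) < e" using e by (simp add: power_less_imp_less_base)
    qed
  qed
  then obtain m where lim: "y \<longlonglongrightarrow> m" using Cauchy_convergent_iff convergent_def by blast
  have mM: "m \<in> M" using closed_sequentially[OF cl yM lim] .
  have "(\<lambda>n. norm (x - y n)^2) \<longlonglongrightarrow> norm (x - m)^2"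
    by (intro tendsto_intros lim)
  moreover have "(\<lambda>n. d^2 + inverse (real (Suc n))) \<longlonglongrightarrow> d^2 + 0"
    by (intro tendsto_intros LIMSEQ_inverse_real_of_nat)
  ultimately have mle: "norm (x - m)^2 \<le> d^2"
    using yb by (intro LIMSEQ_le) (auto intro: less_imp_le)
  show ?thesis
  proof (intro bexI[OF _ mM] ballI)
    fix z assume zM: "z \<in> M"
    define c where "c = inner (x - m) z"
    define N where "N = inner z z"
    define t where "t = c / (N + 1)"
    have N0: "N \<ge> 0" unfolding N_def by simp
    have "m + t *\<^sub>R z \<in> M" using mM zM sub by (simp add: subspace_add subspace_scale)
    hence "d \<le> norm (x - (m + t *\<^sub>R z))" by (rule dle)
    hence "d^2 \<le> norm (x - (m + t *\<^sub>R z))^2" using d0 power_mono by blast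
    moreover have "norm (x - (m + t *\<^sub>R z))^2 = norm (x - m)^2 - 2 * t * c + t^2 * N"
      unfolding power2_norm_eq_inner c_def N_def
      by (simp add: inner_diff_left inner_diff_right inner_add_left inner_add_right inner_commute algebra_simps power2_eq_square)
    ultimately have "2 * t * c \<le> t^2 * N" using mle by linarith
    hence A: "2 * t * c * (N + 1)^2 \<le> t^2 * N * (N + 1)^2"
      by (intro mult_right_mono) auto
    have B: "t * (N + 1) = c" unfolding t_def using N0 by simp
    have "2 * t * c * (N + 1)^2 = 2 * c * (t * (N + 1)) * (N + 1)"
      by (simp add: power2_eq_square algebra_simps)
    also have "\<dots> = 2 * c * c * (N + 1)" using B by simp
    finally have A1: "2 * t * c * (N + 1)^2 = 2 * c * c * (N + 1)" .
    have "t^2 * N * (N + 1)^2 = (t * (N + 1)) * (t * (N + 1)) * N"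
      by (simp add: power2_eq_square algebra_simps)
    also have "\<dots> = c * c * N" using B by simp
    finally have A2: "t^2 * N * (N + 1)^2 = c * c * N" .
    have A3: "c * c * (N + 2) = 2 * c * c * (N + 1) - c * c * N" by (simp add: algebra_simps)
    have "c * c * (N + 2) \<le> 0" using A A1 A2 A3 by linarith
    moreover have "c * c \<ge> 0" by simp
    ultimately have "c * c = 0" using N0
      by (metis add_nonneg_pos mult_le_0_iff order_antisym_conv zero_less_numeral linorder_not_less mult_pos_pos)
    then show "inner (x - m) z = 0" unfolding c_def by simp
  qed
qed

lemma orth_proj_exists:
  fixes M :: "'h::{real_inner,complete_space} set"
  assumes cs: "complex_structure J" and cl: "closed M" and sub: "subspace M"
    and Jinv: "\<forall>y\<in>M. J y \<in> M"
  shows "\<exists>q. is_projection J q \<and> range q = M"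
proof -
  define P where "P x = (SOME m. m \<in> M \<and> (\<forall>z\<in>M. inner (x - m) z = 0))" for x
  have PM: "P x \<in> M \<and> (\<forall>z\<in>M. inner (x - P x) z = 0)" for x
  proof -
    have ex: "\<exists>m. m \<in> M \<and> (\<forall>z\<in>M. inner (x - m) z = 0)" using proj_thm[OF cl sub, of x] by blast
    show ?thesis unfolding P_def using someI_ex[OF ex] .
  qed
  have uniq: "P x = m" if "m \<in> M" "\<forall>z\<in>M. inner (x - m) z = 0" for x m
  proof -
    have dM: "P x - m \<in> M" using PM[of x] that(1) sub by (simp add: subspace_diff)
    have "inner (P x - m) (P x - m) = inner (x - m) (P x - m) - inner (x - P x) (P x - m)"
      by (simp add: inner_diff_left)
    also have "\<dots> = 0" using that(2) PM[of x] dM by simp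
    finally show ?thesis by simp
  qed
  have Padd: "P (x + y) = P x + P y" for x y
    apply (rule uniq)
    using PM[of x] PM[of y] sub apply (simp add: subspace_add)
  proof
    fix z assume z: "z \<in> M"
    have "(x + y) - (P x + P y) = (x - P x) + (y - P y)" by simp
    hence "inner ((x + y) - (P x + P y)) z = inner (x - P x) z + inner (y - P y) z"
      by (simp only: inner_add_left)
    thus "inner ((x + y) - (P x + P y)) z = 0" using PM[of x] PM[of y] z by simp
  qed
  have Pscale: "P (r *\<^sub>R x) = r *\<^sub>R P x" for r x
    apply (rule uniq)
    using PM[of x] sub apply (simp add: subspace_scale)
  proof
    fix z assume z: "z \<in> M"
    have "r *\<^sub>R x - r *\<^sub>R P x = r *\<^sub>R (x - P x)" by (simp add: scaleR_right_diff_distrib)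
    hence "inner (r *\<^sub>R x - r *\<^sub>R P x) z = r * inner (x - P x) z" by (simp only: inner_scaleR_left)
    thus "inner (r *\<^sub>R x - r *\<^sub>R P x) z = 0" using PM[of x] z by simp
  qed
  have Pnorm: "norm (P x) \<le> norm x * 1" for x
  proof -
    have o: "inner (P x) (x - P x) = 0" using PM[of x] by (metis inner_commute)
    have ex: "inner (a + b) (a + b) = inner a a + 2 * inner a b + inner b b" for a b :: 'h
      by (simp add: inner_add_left inner_add_right inner_commute[of b a])
    have "x = P x + (x - P x)" by simp
    hence "inner x x = inner (P x) (P x) + 2 * inner (P x) (x - P x) + inner (x - P x) (x - P x)"
      using ex by metis
    hence "(norm x)^2 = (norm (P x))^2 + (norm (x - P x))^2"
      unfolding power2_norm_eq_inner using o by simp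
    hence "(norm (P x))^2 \<le> (norm x)^2" by (simp del: norm_minus_commute)
    hence "norm (P x) \<le> norm x" by (rule power2_le_imp_le[OF _ norm_ge_zero])
    thus ?thesis by simp
  qed
  have bl: "bounded_linear P" by (rule bounded_linear_intro[OF Padd Pscale Pnorm])
  have fixM: "P m = m" if "m \<in> M" for m using uniq[OF that] by simp
  have idem: "P \<circ> P = P"
  proof
    fix x show "(P \<circ> P) x = P x" using fixM[of "P x"] PM[of x] by simp
  qed
  have sa: "inner (P x) y = inner x (P y)" for x y
  proof -
    have "inner (P x) y = inner (P x) (P y) + inner (P x) (y - P y)" by (simp add: inner_diff_right)
    also have "\<dots> = inner (P x) (P y)" using PM[of y] PM[of x] by (simp add: inner_commute)
    also have "\<dots> = inner (P x) (P y) + inner (x - P x) (P y)" using PM[of x] PM[of y] by simp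
    also have "\<dots> = inner x (P y)" by (simp add: inner_diff_left)
    finally show ?thesis .
  qed
  have linJ: "linear J" and JJ: "\<And>x. J (J x) = - x" and Jin: "\<And>x y. inner (J x) (J y) = inner x y"
    using cs unfolding complex_structure_def by auto
  have Jadj: "inner (J u) z = - inner u (J z)" for u z
    using Jin[of "J u" z] JJ[of u] by simp
  have PJ: "P (J x) = J (P x)" for x
  proof (rule uniq)
    show "J (P x) \<in> M" using Jinv PM[of x] by blast
    show "\<forall>z\<in>M. inner (J x - J (P x)) z = 0"
    proof
      fix z assume "z \<in> M"
      hence "J z \<in> M" using Jinv by blast
      have "J x - J (P x) = J (x - P x)" using linJ by (simp add: linear_diff)
      hence "inner (J x - J (P x)) z = - inner (x - P x) (J z)" using Jadj by simp
      thus "inner (J x - J (P x)) z = 0" using PM[of x] \<open>J z \<in> M\<close> by simp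
    qed
  qed
  have "is_projection J P" unfolding is_projection_def using bl PJ idem sa by auto
  moreover have "range P = M"
  proof
    show "range P \<subseteq> M" using PM by auto
    show "M \<subseteq> range P"
    proof
      fix m assume "m \<in> M"
      hence "P m = m" by (rule fixM)
      thus "m \<in> range P" by (metis rangeI)
    qed
  qed
  ultimately show ?thesis by blast
qed


lemma proj_range: "is_projection J q \<Longrightarrow> range q = {y. q y = y}"
  unfolding is_projection_def by (auto simp: fun_eq_iff) (metis rangeI)

lemma proj_fix: "is_projection J q \<Longrightarrow> y \<in> range q \<Longrightarrow> q y = y"
  using proj_range by blast

lemma proj_eqI:
  fixes u v :: "'h::real_inner"
  assumes "\<And>y. inner u y = inner v y" shows "u = v"
proof -
  have "inner (u - v) (u - v) = 0" using assms[of "u - v"] by (simp add: inner_diff_left)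
  thus ?thesis by simp
qed

lemma proj_unique:
  assumes q1: "is_projection J q1" and q2: "is_projection J q2" and r: "range q1 = range q2"
  shows "q1 = q2"
proof
  fix x
  have sa1: "\<And>x y. inner (q1 x) y = inner x (q1 y)" and sa2: "\<And>x y. inner (q2 x) y = inner x (q2 y)"
    using q1 q2 unfolding is_projection_def by auto
  have f1: "q1 (q2 y) = q2 y" for y using proj_fix[OF q1] r by (metis rangeI)
  have f2: "q2 (q1 y) = q1 y" for y using proj_fix[OF q2] r by (metis rangeI)
  show "q1 x = q2 x"
  proof (rule proj_eqI)
    fix y
    have "inner (q1 x) y = inner (q2 (q1 x)) y" using f2 by simp
    also have "\<dots> = inner (q1 x) (q2 y)" using sa2 by simp
    also have "\<dots> = inner x (q1 (q2 y))" using sa1 by simp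
    also have "\<dots> = inner x (q2 y)" using f1 by simp
    also have "\<dots> = inner (q2 x) y" using sa2 by simp
    finally show "inner (q1 x) y = inner (q2 x) y" .
  qed
qed

lemma bl_zero: "bounded_linear f \<Longrightarrow> f 0 = 0"
  using bounded_linear.linear linear_0 by blast

lemma wedge_ok:
  fixes J :: "'h::{real_inner,complete_space} \<Rightarrow> 'h"
  assumes cs: "complex_structure J" and P: "\<forall>q\<in>P. is_projection J q"
  shows "is_projection J (wedge J P) \<and> range (wedge J P) = \<Inter> (range ` P)"
proof -
  define M where "M = \<Inter> (range ` P)"
  have rq: "range q = {y. q y = id y}" if "q \<in> P" for q using proj_range[of J q] P that by auto
  have M: "M = \<Inter> ((\<lambda>q. {y. q y = id y}) ` P)" unfolding M_def
    by (rule arg_cong[where f=Inter], rule image_cong[OF refl]) (use rq in auto)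
  have cl: "closed M" unfolding M
    using P by (intro closed_INT ballI closed_Collect_eq linear_continuous_on continuous_on_id)
      (auto simp: is_projection_def)
  have sub: "subspace M" unfolding M
  proof (intro subspace_Inter ballI, clarify, rule subspaceI)
    fix q assume "q \<in> P"
    hence bl: "bounded_linear q" using P unfolding is_projection_def by auto
    interpret bounded_linear q by fact
    show "0 \<in> {y. q y = id y}" by (simp add: zero)
    show "x + y \<in> {y. q y = id y}" if "x \<in> {y. q y = id y}" "y \<in> {y. q y = id y}" for x y
      using that by (simp add: add)
    show "c *\<^sub>R x \<in> {y. q y = id y}" if "x \<in> {y. q y = id y}" for c x
      using that by (simp add: scaleR)
  qed
  have Jinv: "\<forall>y\<in>M. J y \<in> M"
  proof
    fix y assume y: "y \<in> M"
    show "J y \<in> M" unfolding M_def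
    proof
      fix q assume q: "q \<in> P"
      have "q y = y" using proj_fix[of J q y] P q y unfolding M_def by auto
      hence "q (J y) = J y" using P q unfolding is_projection_def by metis
      thus "J y \<in> range q" by (metis rangeI)
    qed
  qed
  obtain q where q: "is_projection J q" "range q = M" using orth_proj_exists[OF cs cl sub Jinv] by blast
  have "is_projection J (wedge J P) \<and> range (wedge J P) = M"
    unfolding wedge_def M_def[symmetric]
    apply (rule theI[of _ q])
    using q apply blast
    using q proj_unique by metis
  thus ?thesis unfolding M_def .
qed

lemma wedge_absorb:
  assumes w: "is_projection J w" and q: "is_projection J q" and r: "range w \<subseteq> range q"
  shows "w (q x) = w x"
proof (rule proj_eqI)
  fix y
  have sa1: "\<And>x y. inner (w x) y = inner x (w y)" and sa2: "\<And>x y. inner (q x) y = inner x (q y)"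
    using w q unfolding is_projection_def by auto
  have f: "q (w y) = w y" using proj_fix[OF q] r by blast
  have "inner (w (q x)) y = inner (q x) (w y)" using sa1 by simp
  also have "\<dots> = inner x (q (w y))" using sa2 by simp
  also have "\<dots> = inner (w x) y" using f sa1 by simp
  finally show "inner (w (q x)) y = inner (w x) y" .
qed


lemma foldr_comp_app: "foldr (\<circ>) (xs @ ys) id x = foldr (\<circ>) xs id (foldr (\<circ>) ys id x)"
  by (induction xs) auto

lemma foldr_comp_gen: "foldr (\<circ>) xs g x = foldr (\<circ>) xs id (g x)"
  by (induction xs) auto

lemma foldr_zero: "\<forall>q\<in>set qs. bounded_linear q \<Longrightarrow> foldr (\<circ>) qs id 0 = (0::'h::real_normed_vector)"
  by (induction qs) (auto simp: bl_zero)

lemma wedge_prod: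
  assumes w: "is_projection J w" and qs: "\<forall>q\<in>set qs. is_projection J q \<and> range w \<subseteq> range q"
  shows "w (foldr (\<circ>) qs id x) = w x"
  using qs by (induction qs) (auto simp: wedge_absorb[OF w])

definition Qv :: "('s \<Rightarrow> 'b \<Rightarrow> 'h \<Rightarrow> 'h) \<Rightarrow> 's set \<Rightarrow> ('s \<Rightarrow> 'b) \<Rightarrow> 'h \<Rightarrow> 'h" where
  "Qv p T f \<phi> = foldr (\<circ>) (map (\<lambda>t. p t (f t)) (SOME xs. distinct xs \<and> set xs = T)) id \<phi>"

lemma some_list: "finite T \<Longrightarrow> distinct (SOME xs. distinct xs \<and> set xs = T) \<and> set (SOME xs. distinct xs \<and> set xs = T) = T"
proof -
  assume "finite T"
  then obtain xs where "set xs = T \<and> distinct xs" using finite_distinct_list by blast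
  hence ex: "\<exists>xs. distinct xs \<and> set xs = T" by blast
  show ?thesis using someI_ex[OF ex] .
qed

lemma Qv_list:
  assumes phi: "\<phi> \<in> commuting_vectors (proj_family S \<Gamma> p)" and T: "finite T" "T \<subseteq> S"
    and f: "\<forall>t\<in>T. f t \<in> \<Gamma> t" and xs: "distinct xs" "set xs = T"
  shows "Qv p T f \<phi> = foldr (\<circ>) (map (\<lambda>t. p t (f t)) xs) id \<phi>"
proof -
  define ys where "ys = (SOME xs. distinct xs \<and> set xs = T)"
  have ys: "distinct ys" "set ys = T" using some_list[OF T(1)] unfolding ys_def by auto
  have m: "mset ys = mset xs" using ys xs by (metis mset_set_set)
  have sub: "set (map (\<lambda>t. p t (f t)) zs) \<subseteq> proj_family S \<Gamma> p" if "set zs = T" for zs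
    using that T f unfolding proj_family_def by auto
  show ?thesis unfolding Qv_def ys_def[symmetric]
    using phi sub[OF ys(2)] sub[OF xs(2)] m unfolding commuting_vectors_def by auto
qed

lemma Qv_cong: "finite T \<Longrightarrow> \<forall>t\<in>T. f t = g t \<Longrightarrow> Qv p T f \<phi> = Qv p T g \<phi>"
proof -
  assume T: "finite T" and e: "\<forall>t\<in>T. f t = g t"
  have s: "set (SOME xs. distinct xs \<and> set xs = T) = T" using some_list[OF T] by blast
  have "map (\<lambda>t. p t (f t)) (SOME xs. distinct xs \<and> set xs = T) = map (\<lambda>t. p t (g t)) (SOME xs. distinct xs \<and> set xs = T)"
    by (rule map_cong[OF refl]) (use s e in auto)
  thus ?thesis unfolding Qv_def by (rule arg_cong[where f="\<lambda>l. foldr (\<circ>) l id \<phi>"])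
qed

lemma Qv_mono:
  assumes phi: "\<phi> \<in> commuting_vectors (proj_family S \<Gamma> p)" and T: "finite T'" "T' \<subseteq> S" "T \<subseteq> T'"
    and f: "\<forall>t\<in>T'. f t \<in> \<Gamma> t" and proj: "\<forall>t\<in>S. \<forall>a\<in>\<Gamma> t. is_projection J (p t a)"
    and z: "Qv p T f \<phi> = 0"
  shows "Qv p T' f \<phi> = 0"
proof -
  obtain xs where xs: "distinct xs" "set xs = T' - T" using finite_distinct_list T by (meson finite_Diff)
  obtain ys where ys: "distinct ys" "set ys = T" using finite_distinct_list T by (meson finite_subset)
  have "Qv p T' f \<phi> = foldr (\<circ>) (map (\<lambda>t. p t (f t)) (xs @ ys)) id \<phi>"
    using xs ys T by (intro Qv_list[OF phi _ _ f]) auto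
  also have "\<dots> = foldr (\<circ>) (map (\<lambda>t. p t (f t)) xs) id (Qv p T f \<phi>)"
  proof -
    have "Qv p T f \<phi> = foldr (\<circ>) (map (\<lambda>t. p t (f t)) ys) id \<phi>"
      by (intro Qv_list[OF phi]) (use ys T f in auto)
    thus ?thesis by (simp add: foldr_comp_app foldr_comp_gen[of _ "foldr (\<circ>) _ id"])
  qed
  also have "\<dots> = 0" unfolding z
    using xs T f proj by (intro foldr_zero) (auto simp: is_projection_def)
  finally show ?thesis .
qed

lemma Qv_add:
  assumes phi: "\<phi> \<in> commuting_vectors (proj_family S \<Gamma> p)" and T: "finite T" "T \<subseteq> S" "t \<in> S" "t \<notin> T"
    and f: "\<forall>s\<in>T. f s \<in> \<Gamma> s" and resol: "\<forall>t\<in>S. \<forall>x. (\<Sum>a\<in>\<Gamma> t. p t a x) = x"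
  shows "(\<Sum>a\<in>\<Gamma> t. Qv p (insert t T) (f(t := a)) \<phi>) = Qv p T f \<phi>"
proof -
  obtain ys where ys: "distinct ys" "set ys = T" using finite_distinct_list T by blast
  have "Qv p (insert t T) (f(t := a)) \<phi> = p t a (Qv p T f \<phi>)" if a: "a \<in> \<Gamma> t" for a
  proof -
    have "Qv p (insert t T) (f(t := a)) \<phi> = foldr (\<circ>) (map (\<lambda>s. p s ((f(t := a)) s)) (t # ys)) id \<phi>"
      using ys T f a by (intro Qv_list[OF phi]) auto
    also have "\<dots> = p t a (foldr (\<circ>) (map (\<lambda>s. p s ((f(t := a)) s)) ys) id \<phi>)"
      by simp
    also have "\<dots> = p t a (Qv p T (f(t := a)) \<phi>)"
      using Qv_list[OF phi T(1,2) _ ys, of "f(t := a)"] f T(4) ys by auto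
    also have "\<dots> = p t a (Qv p T f \<phi>)"
      using Qv_cong[OF T(1), of "f(t := a)" f p \<phi>] T(4) by auto
    finally show ?thesis .
  qed
  hence "(\<Sum>a\<in>\<Gamma> t. Qv p (insert t T) (f(t := a)) \<phi>) = (\<Sum>a\<in>\<Gamma> t. p t a (Qv p T f \<phi>))"
    by (intro sum.cong) auto
  also have "\<dots> = Qv p T f \<phi>" using resol T by auto
  finally show ?thesis .
qed

lemma Qv_range:
  assumes phi: "\<phi> \<in> commuting_vectors (proj_family S \<Gamma> p)" and T: "finite T" "T \<subseteq> S" "t \<in> T"
    and f: "\<forall>s\<in>T. f s \<in> \<Gamma> s"
  shows "Qv p T f \<phi> \<in> range (p t (f t))"
proof -
  obtain ys where ys: "distinct ys" "set ys = T - {t}" using finite_distinct_list T by (meson finite_Diff)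
  have "Qv p T f \<phi> = foldr (\<circ>) (map (\<lambda>s. p s (f s)) (t # ys)) id \<phi>"
    using ys T f by (intro Qv_list[OF phi]) auto
  thus ?thesis by simp
qed

lemma wedge_Qv:
  fixes J :: "'h::{real_inner,complete_space} \<Rightarrow> 'h"
  assumes cs: "complex_structure J" and T: "finite T" "T \<subseteq> S"
    and f: "\<forall>s\<in>T. f s \<in> \<Gamma> s" and proj: "\<forall>t\<in>S. \<forall>a\<in>\<Gamma> t. is_projection J (p t a)"
  shows "wedge J ((\<lambda>t. p t (f t)) ` T) (Qv p T f \<phi>) = wedge J ((\<lambda>t. p t (f t)) ` T) \<phi>"
proof -
  have P: "\<forall>q\<in>(\<lambda>t. p t (f t)) ` T. is_projection J q" using T f proj by auto
  note w = wedge_ok[OF cs P]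
  show ?thesis unfolding Qv_def
    using some_list[OF T(1)] w P by (intro wedge_prod) auto
qed

lemma wedge_zero_iff:
  fixes J :: "'h::{real_inner,complete_space} \<Rightarrow> 'h"
  assumes cs: "complex_structure J" and phi: "\<phi> \<in> commuting_vectors (proj_family S \<Gamma> p)"
    and T: "finite T" "T \<subseteq> S"
    and f: "\<forall>s\<in>T. f s \<in> \<Gamma> s" and proj: "\<forall>t\<in>S. \<forall>a\<in>\<Gamma> t. is_projection J (p t a)"
  shows "wedge J ((\<lambda>t. p t (f t)) ` T) \<phi> = 0 \<longleftrightarrow> Qv p T f \<phi> = 0"
proof -
  have P: "\<forall>q\<in>(\<lambda>t. p t (f t)) ` T. is_projection J q" using T f proj by auto
  note w = wedge_ok[OF cs P]
  note e = wedge_Qv[OF cs T f proj, of \<phi>]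
  have inr: "Qv p T f \<phi> \<in> range (wedge J ((\<lambda>t. p t (f t)) ` T))"
    using w Qv_range[OF phi T _ f] by auto
  have fx: "wedge J ((\<lambda>t. p t (f t)) ` T) (Qv p T f \<phi>) = Qv p T f \<phi>"
    using proj_fix[OF conjunct1[OF w] inr] .
  have z: "wedge J ((\<lambda>t. p t (f t)) ` T) 0 = 0"
    using w by (simp add: is_projection_def bl_zero)
  show ?thesis using e fx z by metis
qed


lemma ext_val:
  assumes "G \<subseteq> Sigma (S - D) \<Gamma>" "\<forall>t a b. (t,a)\<in>G \<longrightarrow> (t,b)\<in>G \<longrightarrow> a = b" "(t, a) \<in> G"
  shows "(if t \<in> D then \<omega> t else (THE a. (t,a) \<in> G)) = a"
  using assms by (auto intro!: the_equality)

theorem theorem4: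
  fixes J :: "'h::{real_inner, complete_space} \<Rightarrow> 'h"
    and S :: "'s set" and \<Gamma> :: "'s \<Rightarrow> 'b set"
    and p :: "'s \<Rightarrow> 'b \<Rightarrow> 'h \<Rightarrow> 'h"
    and D :: "'s set" and A :: "('s \<Rightarrow> 'b) set"
  assumes cs: "complex_structure J"
    and fin: "\<forall>t\<in>S. finite (\<Gamma> t)"
    and proj: "\<forall>t\<in>S. \<forall>a\<in>\<Gamma> t. is_projection J (p t a)"
    and resol: "\<forall>t\<in>S. \<forall>x. (\<Sum>a\<in>\<Gamma> t. p t a x) = x"
    and DS: "D \<subseteq> S"
    and AO: "A \<subseteq> Omega S \<Gamma>"
    and det: "determined (Omega S \<Gamma>) D A"
  shows "F_set J p S A \<inter> commuting_vectors (proj_family S \<Gamma> p)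
       = F_set J p D A \<inter> commuting_vectors (proj_family S \<Gamma> p)"
proof
  show "F_set J p D A \<inter> commuting_vectors (proj_family S \<Gamma> p)
       \<subseteq> F_set J p S A \<inter> commuting_vectors (proj_family S \<Gamma> p)"
    using DS unfolding F_set_def by blast
next
  show "F_set J p S A \<inter> commuting_vectors (proj_family S \<Gamma> p)
       \<subseteq> F_set J p D A \<inter> commuting_vectors (proj_family S \<Gamma> p)"
  proof clarify
    fix \<phi> assume phiF: "\<phi> \<in> F_set J p S A" and phi: "\<phi> \<in> commuting_vectors (proj_family S \<Gamma> p)"
    show "\<phi> \<in> F_set J p D A" unfolding F_set_def
    proof (intro CollectI ballI)
      fix \<omega> assume \<omega>A: "\<omega> \<in> A"
      have \<omega>O: "\<omega> \<in> PiE S \<Gamma>" using AO \<omega>A unfolding Omega_def by blast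
      show "\<exists>T. finite T \<and> T \<subseteq> D \<and> wedge J ((\<lambda>t. p t (\<omega> t)) ` T) \<phi> = 0"
      proof (rule ccontr)
        assume nz: "\<not> ?thesis"
        have base: "Qv p T \<omega> \<phi> \<noteq> 0" if "finite T" "T \<subseteq> D" for T
          using nz that wedge_zero_iff[OF cs phi that(1) _ _ proj, of \<omega>] DS \<omega>O by (auto simp: PiE_iff)
        define ext where "ext G t = (if t \<in> D then \<omega> t else (THE a. (t,a) \<in> G))" for G t
        define good where "good G \<longleftrightarrow> G \<subseteq> Sigma (S - D) \<Gamma> \<and> (\<forall>t a b. (t,a)\<in>G \<longrightarrow> (t,b)\<in>G \<longrightarrow> a = b)
            \<and> (\<forall>T. finite T \<and> T \<subseteq> D \<union> Domain G \<longrightarrow> Qv p T (ext G) \<phi> \<noteq> 0)" for G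
        have goodD1: "G \<subseteq> Sigma (S - D) \<Gamma>" if "good G" for G
          using that unfolding good_def by (elim conjE)
        have goodD2: "\<forall>t a b. (t,a)\<in>G \<longrightarrow> (t,b)\<in>G \<longrightarrow> a = b" if "good G" for G
          using that unfolding good_def by (elim conjE)
        have goodD3: "Qv p T (ext G) \<phi> \<noteq> 0" if "good G" "finite T" "T \<subseteq> D \<union> Domain G" for G T
        proof -
          have "\<forall>T. finite T \<and> T \<subseteq> D \<union> Domain G \<longrightarrow> Qv p T (ext G) \<phi> \<noteq> 0"
            using that(1) unfolding good_def by (elim conjE)
          thus ?thesis using that(2,3) by blast
        qed
        have goodI: "good G" if "G \<subseteq> Sigma (S - D) \<Gamma>" "\<forall>t a b. (t,a)\<in>G \<longrightarrow> (t,b)\<in>G \<longrightarrow> a = b"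
            "\<And>T. finite T \<Longrightarrow> T \<subseteq> D \<union> Domain G \<Longrightarrow> Qv p T (ext G) \<phi> \<noteq> 0" for G
        proof -
          have h: "\<forall>T. finite T \<and> T \<subseteq> D \<union> Domain G \<longrightarrow> Qv p T (ext G) \<phi> \<noteq> 0"
            using that(3) by blast
          show ?thesis unfolding good_def by (intro conjI that(1) that(2) h)
        qed
        have extv: "ext G t = a" if "G \<subseteq> Sigma (S - D) \<Gamma>" "\<forall>t a b. (t,a)\<in>G \<longrightarrow> (t,b)\<in>G \<longrightarrow> a = b" "(t, a) \<in> G" for G t a
          unfolding ext_def using ext_val[OF that] .
        have extin: "t \<in> S \<and> ext G t \<in> \<Gamma> t" if gG: "good G" and tG: "t \<in> D \<union> Domain G" for G t
        proof (cases "t \<in> D")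
          case True thus ?thesis using DS \<omega>O unfolding ext_def by (auto simp: PiE_iff)
        next
          case False
          then obtain a where a: "(t, a) \<in> G" using tG by blast
          have "ext G t = a" using extv[OF goodD1[OF gG] goodD2[OF gG] a] .
          thus ?thesis using a goodD1[OF gG] by auto
        qed
        have "\<exists>M\<in>{G. good G}. \<forall>X\<in>{G. good G}. M \<subseteq> X \<longrightarrow> X = M"
        proof (rule Zorn_Lemma2, rule ballI)
          fix C assume C: "C \<in> chains {G. good G}"
          show "\<exists>U\<in>{G. good G}. \<forall>X\<in>C. X \<subseteq> U"
          proof (cases "C = {}")
            case True
            have "good {}"
            proof (rule goodI)
              fix T :: "'s set" assume T: "finite T" "T \<subseteq> D \<union> Domain {}"
              have "Qv p T (ext {}) \<phi> = Qv p T \<omega> \<phi>" using T by (intro Qv_cong) (auto simp: ext_def)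
              thus "Qv p T (ext {}) \<phi> \<noteq> 0" using base T by auto
            qed auto
            thus ?thesis using True by auto
          next
            case False
            have Csub: "\<And>G. G \<in> C \<Longrightarrow> good G" using chainsD2[OF C] by auto
            define U where "U = \<Union>C"
            have U1: "U \<subseteq> Sigma (S - D) \<Gamma>" unfolding U_def using Csub goodD1 by blast
            have U2: "\<forall>t a b. (t,a)\<in>U \<longrightarrow> (t,b)\<in>U \<longrightarrow> a = b"
            proof (intro allI impI)
              fix t a b assume "(t,a) \<in> U" "(t,b) \<in> U"
              then obtain G1 G2 where "G1 \<in> C" "G2 \<in> C" "(t,a) \<in> G1" "(t,b) \<in> G2" unfolding U_def by auto
              note G = this
              show "a = b"
              proof (cases "G1 \<subseteq> G2")
                case True thus ?thesis using G goodD2[OF Csub[OF G(2)]] by blast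
              next
                case False
                hence "G2 \<subseteq> G1" using chainsD[OF C G(1,2)] by blast
                thus ?thesis using G goodD2[OF Csub[OF G(1)]] by blast
              qed
            qed
            have "good U"
            proof (rule goodI[OF U1 U2])
              fix T assume T: "finite T" "T \<subseteq> D \<union> Domain U"
              define Pr where "Pr = (\<lambda>t. (t, ext U t)) ` (T - D)"
              have Pr_sub: "Pr \<subseteq> \<Union>C"
              proof
                fix x assume "x \<in> Pr"
                then obtain t where t: "t \<in> T" "t \<notin> D" "x = (t, ext U t)" unfolding Pr_def by auto
                then obtain a where a: "(t, a) \<in> U" using T by auto
                have "ext U t = a" using extv[OF U1 U2 a] .
                thus "x \<in> \<Union>C" using a t unfolding U_def by auto
              qed
              have sc: "subset.chain {G. good G} C" using C by (simp add: chains_alt_def)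
              obtain G0 where G0: "G0 \<in> C" "Pr \<subseteq> G0"
                using finite_subset_Union_chain[OF _ Pr_sub False sc] T(1) unfolding Pr_def by blast
              have gG0: "good G0" using Csub G0(1) .
              have G0U: "G0 \<subseteq> U" using G0(1) unfolding U_def by auto
              have TG0: "T \<subseteq> D \<union> Domain G0" using G0(2) unfolding Pr_def by auto
              have eq: "\<forall>t\<in>T. ext G0 t = ext U t"
              proof
                fix t assume t: "t \<in> T"
                show "ext G0 t = ext U t"
                proof (cases "t \<in> D")
                  case True thus ?thesis unfolding ext_def by simp
                next
                  case False
                  hence "(t, ext U t) \<in> G0" using G0(2) t unfolding Pr_def by auto
                  thus ?thesis using extv[OF goodD1[OF gG0] goodD2[OF gG0]] by blast
                qed
              qed
              have "Qv p T (ext G0) \<phi> \<noteq> 0" using goodD3[OF gG0 T(1) TG0] .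
              moreover have "Qv p T (ext G0) \<phi> = Qv p T (ext U) \<phi>" by (rule Qv_cong[OF T(1) eq])
              ultimately show "Qv p T (ext U) \<phi> \<noteq> 0" by simp
            qed
            thus ?thesis unfolding U_def by auto
          qed
        qed
        then obtain M where gM: "good M" and max: "\<And>X. good X \<Longrightarrow> M \<subseteq> X \<Longrightarrow> X = M" by blast
        have M1: "M \<subseteq> Sigma (S - D) \<Gamma>" and M2: "\<forall>t a b. (t,a)\<in>M \<longrightarrow> (t,b)\<in>M \<longrightarrow> a = b"
          and M3: "\<And>T. finite T \<Longrightarrow> T \<subseteq> D \<union> Domain M \<Longrightarrow> Qv p T (ext M) \<phi> \<noteq> 0"
          using goodD1[OF gM] goodD2[OF gM] goodD3[OF gM] by auto
        have dom: "Domain M = S - D"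
        proof (rule ccontr)
          assume "Domain M \<noteq> S - D"
          moreover have "Domain M \<subseteq> S - D" using M1 by auto
          ultimately obtain t where t: "t \<in> S" "t \<notin> D" "t \<notin> Domain M" by auto
          have "\<exists>T. finite T \<and> T \<subseteq> D \<union> insert t (Domain M) \<and> Qv p T ((ext M)(t := a)) \<phi> = 0"
            if a: "a \<in> \<Gamma> t" for a
          proof -
            define M' where "M' = insert (t, a) M"
            have M'1: "M' \<subseteq> Sigma (S - D) \<Gamma>" using M1 t a unfolding M'_def by auto
            have M'2: "\<forall>s c b. (s,c)\<in>M' \<longrightarrow> (s,b)\<in>M' \<longrightarrow> c = b" using M2 t unfolding M'_def by auto
            have "M' \<noteq> M" using t unfolding M'_def by auto
            hence "\<not> good M'" using max[of M'] unfolding M'_def by auto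
            then obtain T where T: "finite T" "T \<subseteq> D \<union> Domain M'" "Qv p T (ext M') \<phi> = 0"
              using goodI[OF M'1 M'2] by blast
            have "\<forall>s\<in>T. ext M' s = ((ext M)(t := a)) s"
            proof
              fix s assume s: "s \<in> T"
              show "ext M' s = ((ext M)(t := a)) s"
              proof (cases "s \<in> D")
                case True thus ?thesis using t unfolding ext_def by auto
              next
                case False
                show ?thesis
                proof (cases "s = t")
                  case True thus ?thesis using extv[OF M'1 M'2, of t a] unfolding M'_def by simp
                next
                  case ne: False
                  then obtain b where b: "(s, b) \<in> M" using s T(2) False unfolding M'_def by auto
                  have "ext M' s = b" using extv[OF M'1 M'2, of s b] b unfolding M'_def by simp
                  moreover have "ext M s = b" using extv[OF M1 M2 b] .
                  ultimately show ?thesis using ne by simp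
                qed
              qed
            qed
            hence "Qv p T ((ext M)(t := a)) \<phi> = 0" using T Qv_cong[OF T(1)] by metis
            thus ?thesis using T unfolding M'_def by auto
          qed
          then obtain Tf where Tf: "\<And>a. a \<in> \<Gamma> t \<Longrightarrow> finite (Tf a) \<and> Tf a \<subseteq> D \<union> insert t (Domain M)
              \<and> Qv p (Tf a) ((ext M)(t := a)) \<phi> = 0" by metis
          define U' where "U' = (\<Union>a\<in>\<Gamma> t. Tf a) - {t}"
          have U'f: "finite U'" unfolding U'_def using fin t Tf by auto
          have U's: "U' \<subseteq> D \<union> Domain M" unfolding U'_def using Tf by auto
          have U'S: "U' \<subseteq> S" using U's DS M1 by auto
          have vals: "\<forall>s\<in>U'. ext M s \<in> \<Gamma> s"
          proof
            fix s assume "s \<in> U'"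
            hence "s \<in> D \<union> Domain M" using U's by blast
            thus "ext M s \<in> \<Gamma> s" using extin[OF gM] by blast
          qed
          have tU: "t \<notin> U'" unfolding U'_def by auto
          have z: "Qv p (insert t U') ((ext M)(t := a)) \<phi> = 0" if a: "a \<in> \<Gamma> t" for a
          proof (rule Qv_mono[OF phi _ _ _ _ proj])
            show "finite (insert t U')" using U'f by simp
            show "insert t U' \<subseteq> S" using U'S t by simp
            show "Tf a \<subseteq> insert t U'" using Tf[OF a] unfolding U'_def using a by auto
            show "\<forall>s\<in>insert t U'. ((ext M)(t := a)) s \<in> \<Gamma> s" using vals a by auto
            show "Qv p (Tf a) ((ext M)(t := a)) \<phi> = 0" using Tf[OF a] by blast
          qed
          have "Qv p U' (ext M) \<phi> = (\<Sum>a\<in>\<Gamma> t. Qv p (insert t U') ((ext M)(t := a)) \<phi>)"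
            using Qv_add[OF phi U'f U'S t(1) tU vals resol] by simp
          also have "\<dots> = 0" using z by simp
          finally show False using M3[OF U'f U's] by simp
        qed
        define \<omega>' where "\<omega>' = restrict (ext M) S"
        have \<omega>'O: "\<omega>' \<in> PiE S \<Gamma>"
          using extin[OF gM] dom unfolding \<omega>'_def by (auto simp: PiE_iff)
        have \<omega>'A: "\<omega>' \<in> A"
        proof -
          have agree: "\<forall>t\<in>D. \<omega> t = \<omega>' t"
          proof
            fix t assume "t \<in> D"
            thus "\<omega> t = \<omega>' t" using DS unfolding \<omega>'_def ext_def by auto
          qed
          have o1: "\<omega> \<in> Omega S \<Gamma>" and o2: "\<omega>' \<in> Omega S \<Gamma>" using \<omega>O \<omega>'O by (simp_all add: Omega_def)
          have detf: "\<forall>\<omega>\<in>Omega S \<Gamma>. \<forall>\<omega>'\<in>Omega S \<Gamma>. (\<forall>t\<in>D. \<omega> t = \<omega>' t) \<longrightarrow> (\<omega> \<in> A \<longleftrightarrow> \<omega>' \<in> A)"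
            using det unfolding determined_def by assumption
          have "(\<forall>t\<in>D. \<omega> t = \<omega>' t) \<longrightarrow> (\<omega> \<in> A \<longleftrightarrow> \<omega>' \<in> A)" by (rule bspec[OF bspec[OF detf o1] o2])
          thus ?thesis using agree \<omega>A by blast
        qed
        have "\<forall>\<omega>\<in>A. \<exists>T. finite T \<and> T \<subseteq> S \<and> wedge J ((\<lambda>t. p t (\<omega> t)) ` T) \<phi> = 0"
          using phiF unfolding F_set_def by simp
        then obtain T where T: "finite T" "T \<subseteq> S" "wedge J ((\<lambda>t. p t (\<omega>' t)) ` T) \<phi> = 0"
          using bspec[OF _ \<omega>'A] by blast
        have "Qv p T \<omega>' \<phi> = 0"
          using T wedge_zero_iff[OF cs phi T(1,2) _ proj, of \<omega>'] \<omega>'O by (auto simp: PiE_iff)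
        moreover have "Qv p T \<omega>' \<phi> = Qv p T (ext M) \<phi>"
          using T unfolding \<omega>'_def by (intro Qv_cong) auto
        moreover have "T \<subseteq> D \<union> Domain M" using T dom by auto
        ultimately show False using M3[OF T(1)] by simp
      qed
    qed
  qed
qed

end
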